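(* Let $H$ be a graph with $n$ vertices and at least $n+2$ edges. Then $H$ contains a cycle of length at most $\frac{n}{2}+1$.
   Context: Graphs may contain loops and parallel edges; a loop is a cycle of length 1 and two parallel edges form a cycle of length 2. *)

theory Defs
  imports Complex_Main
begin

text \<open>A finite multigraph: vertex set V, edge set E (edges are abstract
objects, so parallel edges are allowed), and each edge has a set of one
(a loop) or two endpoints in V.\<close>
definition multigraph :: "'a set \<Rightarrow> 'e set \<Rightarrow> ('e \<Rightarrow> 'a set) \<Rightarrow> bool" where
  "multigraph V E ends \<longleftrightarrow> finite V \<and> finite E \<and>
     (\<forall>e\<in>E. ends e \<subseteq> V \<and> (card (ends e) = 1 \<or> card (ends e) = 2))"

text \<open>A cycle of length k: distinct vertices v_0..v_(k-1) and distinct edges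
e_0..e_(k-1) with e_i joining v_i and v_((i+1) mod k). For k = 1 this is a
loop, for k = 2 a pair of parallel edges.\<close>
definition has_cycle_of_length :: "'a set \<Rightarrow> 'e set \<Rightarrow> ('e \<Rightarrow> 'a set) \<Rightarrow> nat \<Rightarrow> bool" where
  "has_cycle_of_length V E ends k \<longleftrightarrow> k \<ge> 1 \<and>
     (\<exists>vs es. length vs = k \<and> length es = k \<and> distinct vs \<and> distinct es \<and>
        set vs \<subseteq> V \<and> set es \<subseteq> E \<and>
        (\<forall>i<k. ends (es ! i) = {vs ! i, vs ! ((i + 1) mod k)}))"

end

theory Submission
  imports Defs
begin


definition cyc :: "'a set \<Rightarrow> 'e set \<Rightarrow> ('e \<Rightarrow> 'a set) \<Rightarrow> 'a list \<Rightarrow> 'e list \<Rightarrow> bool" where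
  "cyc V E ends vs es \<longleftrightarrow> length vs = length es \<and> length es \<ge> 1 \<and> distinct vs \<and> distinct es \<and>
     set vs \<subseteq> V \<and> set es \<subseteq> E \<and>
     (\<forall>i<length es. ends (es ! i) = {vs ! i, vs ! ((i + 1) mod length es)})"

lemma cyc_mono:
  assumes "cyc V' E' ends' vs es" "V' \<subseteq> V" "E' \<subseteq> E" "\<And>e. e \<in> set es \<Longrightarrow> ends e = ends' e"
  shows "cyc V E ends vs es"
  using assms unfolding cyc_def by (auto simp: subset_iff nth_mem)

lemma cyc_rotate:
  assumes "cyc V E ends vs es"
  shows "cyc V E ends (rotate r vs) (rotate r es)"
proof -
  let ?k = "length es"
  have k: "length vs = ?k" "?k \<ge> 1" using assms by (auto simp: cyc_def)
  have "ends (rotate r es ! i) = {rotate r vs ! i, rotate r vs ! ((i + 1) mod ?k)}" if "i < ?k" for i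
  proof -
    have P: "\<forall>i<?k. ends (es ! i) = {vs ! i, vs ! ((i + 1) mod ?k)}" using assms by (simp add: cyc_def)
    have "ends (es ! ((i + r) mod ?k)) = {vs ! ((i + r) mod ?k), vs ! (((i + r) mod ?k + 1) mod ?k)}"
      using P[rule_format, of "(i + r) mod ?k"] k by (simp add: Suc_le_eq)
    moreover have "((i + r) mod ?k + 1) mod ?k = ((i + 1) mod ?k + r) mod ?k"
      by (simp add: mod_simps algebra_simps)
    moreover have "rotate r es ! i = es ! ((i + r) mod ?k)" using that by (simp add: nth_rotate add.commute)
    moreover have "rotate r vs ! i = vs ! ((i + r) mod ?k)" using that k by (simp add: nth_rotate add.commute)
    moreover have "rotate r vs ! ((i + 1) mod ?k) = vs ! (((i + 1) mod ?k + r) mod ?k)"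
      using k by (simp add: nth_rotate add.commute Suc_le_eq)
    ultimately show ?thesis by simp
  qed
  then show ?thesis using assms k unfolding cyc_def by simp
qed

lemma cyc_lift_end:
  assumes c: "cyc V0 E0 ends0 vs es"
    and k: "length es = k"
    and v: "v \<notin> set vs" "v \<in> V"
    and eab: "ea \<noteq> eb" "ea \<notin> set (butlast es)" "eb \<notin> set (butlast es)" "ea \<in> E" "eb \<in> E"
    and ea: "ends ea = {vs ! (k - 1), v}" and eb: "ends eb = {v, vs ! 0}"
    and agree: "\<And>e. e \<in> set (butlast es) \<Longrightarrow> ends e = ends0 e"
    and sub: "V0 \<subseteq> V" "E0 \<subseteq> E"
  shows "cyc V E ends (vs @ [v]) (butlast es @ [ea, eb])"
proof -
  have k1: "k \<ge> 1" "length vs = k" using c k by (auto simp: cyc_def)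
  have lb: "length (butlast es) = k - 1" using k by simp
  have dist: "distinct (butlast es @ [ea, eb])"
    using c eab by (auto simp: cyc_def distinct_butlast)
  have "ends ((butlast es @ [ea, eb]) ! i) = {(vs @ [v]) ! i, (vs @ [v]) ! ((i + 1) mod (k + 1))}"
    if ik: "i < k + 1" for i
  proof -
    consider "i < k - 1" | "i = k - 1" | "i = k" using ik k1 by fastforce
    then show ?thesis
    proof cases
      case 1
      then have "(butlast es @ [ea, eb]) ! i = es ! i" using lb k by (simp add: nth_append nth_butlast)
      moreover have "es ! i \<in> set (butlast es)" using 1 lb k
        by (metis nth_butlast nth_mem)
      moreover have "ends0 (es ! i) = {vs ! i, vs ! ((i + 1) mod k)}" using c 1 k unfolding cyc_def by auto
      moreover have "(i + 1) mod k = i + 1" "(i + 1) mod (k + 1) = i + 1" using 1 by auto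
      moreover have "i + 1 < k" using 1 by simp
      ultimately show ?thesis using 1 agree k1 by (simp add: nth_append)
    next
      case 2
      then show ?thesis using lb k1 ea by (simp add: nth_append)
    next
      case 3
      moreover have "\<not> k < k - 1" by simp
      ultimately show ?thesis using lb k1 eb by (simp add: nth_append insert_commute)
    qed
  qed
  moreover have "set (butlast es) \<subseteq> E" using c sub by (auto simp: cyc_def dest: in_set_butlastD)
  moreover have len: "length (butlast es @ [ea, eb]) = k + 1" using lb k1 by simp
  ultimately show ?thesis using c v dist eab k1 sub unfolding cyc_def len by auto
qed

lemma contract_lift:
  assumes v: "v \<in> V" and e12: "e1 \<in> E" "e2 \<in> E" "e1 \<noteq> e2"
    and en1: "ends e1 = {v, u}" and en2: "ends e2 = {v, x}" and ux: "u \<noteq> x"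
    and c: "cyc (V - {v}) (E - {e2}) (ends(e1 := {u, x})) vs es"
  shows "\<exists>vs' es'. cyc V E ends vs' es' \<and> sum w (set es') = sum (w(e1 := w e1 + w e2)) (set es)"
proof (cases "e1 \<in> set es")
  case False
  have "cyc V E ends vs es"
    by (rule cyc_mono[OF c]) (use False in auto)
  moreover have "sum w (set es) = sum (w(e1 := w e1 + w e2)) (set es)"
    using False by (intro sum.cong) auto
  ultimately show ?thesis by blast
next
  case True
  let ?k = "length es"
  let ?ends' = "ends(e1 := {u, x})"
  have k: "length vs = ?k" "?k \<ge> 1" using c by (auto simp: cyc_def)
  obtain i where i: "i < ?k" "es ! i = e1" using True by (metis in_set_conv_nth)
  define vs1 where "vs1 = rotate (i + 1) vs"
  define es1 where "es1 = rotate (i + 1) es"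
  have c1: "cyc (V - {v}) (E - {e2}) ?ends' vs1 es1"
    unfolding vs1_def es1_def by (rule cyc_rotate[OF c])
  have l1: "length es1 = ?k" "length vs1 = ?k" using k by (auto simp: vs1_def es1_def)
  have "es1 ! (?k - 1) = es ! ((i + 1 + (?k - 1)) mod ?k)"
    unfolding es1_def by (rule nth_rotate) (use k in simp)
  also have "(i + 1 + (?k - 1)) mod ?k = i"
  proof -
    have "i + 1 + (?k - 1) = i + ?k" using k by simp
    then show ?thesis using i by simp
  qed
  finally have last1: "es1 ! (?k - 1) = e1" using i by simp
  have "?ends' (es1 ! (?k - 1)) = {vs1 ! (?k - 1), vs1 ! ((?k - 1 + 1) mod ?k)}"
    using c1 l1 k unfolding cyc_def by auto
  moreover have "(?k - 1 + 1) mod ?k = 0" using k by (simp add: Suc_le_eq)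
  ultimately have uxv: "{u, x} = {vs1 ! (?k - 1), vs1 ! 0}" using last1 k by simp
  have es1ne: "es1 \<noteq> []" using l1 k by auto
  have bl: "es1 = butlast es1 @ [e1]"
    using last1 es1ne l1 by (metis append_butlast_last_id last_conv_nth)
  have d1: "distinct es1" "distinct vs1" "set vs1 \<subseteq> V - {v}" "set es1 \<subseteq> E - {e2}"
    using c1 by (auto simp: cyc_def)
  have e1nb: "e1 \<notin> set (butlast es1)" using d1(1) bl by (metis distinct_append not_distinct_conv_prefix
        distinct_butlast in_set_conv_decomp distinct.simps(2) set_append)
  have e2nb: "e2 \<notin> set (butlast es1)" using d1(4) by (auto dest: in_set_butlastD)
  have vn: "v \<notin> set vs1" using d1(3) by auto
  have agree: "\<And>e. e \<in> set (butlast es1) \<Longrightarrow> ends e = ?ends' e" using e1nb by auto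
  have sub: "V - {v} \<subseteq> V" "E - {e2} \<subseteq> E" by auto
  have setes: "set es = insert e1 (set (butlast es1))"
    using bl by (metis es1_def set_rotate set_append empty_set list.simps(15) Un_insert_right sup_bot.right_neutral)
  have wsum: "sum w (set (butlast es1 @ [a, b])) = sum (w(e1 := w e1 + w e2)) (set es)"
    if "{a, b} = {e1, e2}" for a b
  proof -
    have "set (butlast es1 @ [a, b]) = insert e1 (insert e2 (set (butlast es1)))"
      using that by auto
    moreover have "sum w (insert e1 (insert e2 (set (butlast es1)))) = w e1 + (w e2 + sum w (set (butlast es1)))"
      using e1nb e2nb e12(3) by simp
    ultimately have "sum w (set (butlast es1 @ [a, b])) = w e1 + w e2 + sum w (set (butlast es1))"
      by (metis add.assoc)
    moreover have "sum (w(e1 := w e1 + w e2)) (set es) = w e1 + w e2 + sum w (set (butlast es1))"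
    proof -
      have "sum (w(e1 := w e1 + w e2)) (set (butlast es1)) = sum w (set (butlast es1))"
        using e1nb by (intro sum.cong) auto
      then show ?thesis unfolding setes using e1nb by simp
    qed
    ultimately show ?thesis by simp
  qed
  show ?thesis
  proof (cases "vs1 ! (?k - 1) = u")
    case True
    then have x0: "vs1 ! 0 = x" using uxv ux by (metis doubleton_eq_iff)
    have "cyc V E ends (vs1 @ [v]) (butlast es1 @ [e1, e2])"
    proof (rule cyc_lift_end[OF c1 l1(1) vn v e12(3) e1nb e2nb e12(1) e12(2) _ _ agree sub])
      show "ends e1 = {vs1 ! (?k - 1), v}" using en1 True by auto
      show "ends e2 = {v, vs1 ! 0}" using en2 x0 by auto
    qed
    then show ?thesis using wsum[of e1 e2] by blast
  next
    case False
    then have x0: "vs1 ! 0 = u" "vs1 ! (?k - 1) = x" using uxv ux by (metis doubleton_eq_iff)+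
    have "cyc V E ends (vs1 @ [v]) (butlast es1 @ [e2, e1])"
    proof (rule cyc_lift_end[OF c1 l1(1) vn v _ e2nb e1nb e12(2) e12(1) _ _ agree sub])
      show "e2 \<noteq> e1" using e12(3) by auto
      show "ends e2 = {vs1 ! (?k - 1), v}" using en2 x0 by auto
      show "ends e1 = {v, vs1 ! 0}" using en1 x0 by auto
    qed
    then show ?thesis using wsum[of e2 e1] by (metis insert_commute)
  qed
qed



lemma handshake:
  assumes mg: "multigraph V E ends" and nl: "\<forall>e\<in>E. card (ends e) = 2"
  shows "(\<Sum>v\<in>V. card {e\<in>E. v \<in> ends e}) = 2 * card E"
proof -
  have fV: "finite V" and fE: "finite E" and sub: "\<forall>e\<in>E. ends e \<subseteq> V"
    using mg by (auto simp: multigraph_def)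
  have "(\<Sum>v\<in>V. card {e\<in>E. v \<in> ends e}) = (\<Sum>v\<in>V. \<Sum>e\<in>E. if v \<in> ends e then 1 else 0)"
    using fE by (simp add: sum.If_cases Int_def conj_commute)
  also have "\<dots> = (\<Sum>e\<in>E. \<Sum>v\<in>V. if v \<in> ends e then 1 else 0)" by (rule sum.swap)
  also have "\<dots> = (\<Sum>e\<in>E. card (ends e))"
  proof (rule sum.cong)
    fix e assume "e \<in> E"
    then have "V \<inter> ends e = ends e" using sub by auto
    then show "(\<Sum>v\<in>V. if v \<in> ends e then 1 else 0) = card (ends e)"
      using fV by (simp add: sum.If_cases)
  qed simp
  also have "\<dots> = (\<Sum>e\<in>E. 2)" using nl by simp
  finally show ?thesis by simp
qed

lemma other_end:
  assumes "card S = 2" "a \<in> S"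
  shows "the_elem (S - {a}) \<noteq> a \<and> S = {a, the_elem (S - {a})}"
proof -
  obtain x y where S: "S = {x, y}" "x \<noteq> y" using assms(1) by (metis card_2_iff)
  show ?thesis
  proof (cases "a = x")
    case True
    then have "S - {a} = {y}" using S by auto
    then show ?thesis using S True by simp
  next
    case False
    then have "a = y" using S assms(2) by auto
    then have "S - {a} = {x}" using S by auto
    then show ?thesis using S \<open>a = y\<close> by auto
  qed
qed

lemma deg_inj:
  assumes mg: "multigraph V E ends" and nl: "\<forall>e\<in>E. card (ends e) = 2"
    and np: "\<forall>e\<in>E. \<forall>f\<in>E. ends e = ends f \<longrightarrow> e = f"
  shows "inj_on (\<lambda>e. the_elem (ends e - {a})) {e\<in>E. a \<in> ends e}"
    and "(\<lambda>e. the_elem (ends e - {a})) ` {e\<in>E. a \<in> ends e} \<subseteq> V - {a}"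
proof -
  show "inj_on (\<lambda>e. the_elem (ends e - {a})) {e\<in>E. a \<in> ends e}"
  proof (rule inj_onI)
    fix e f assume e: "e \<in> {e\<in>E. a \<in> ends e}" and f: "f \<in> {e\<in>E. a \<in> ends e}"
      and eq: "the_elem (ends e - {a}) = the_elem (ends f - {a})"
    have "ends e = {a, the_elem (ends e - {a})}" using other_end[of "ends e" a] nl e by simp
    moreover have "ends f = {a, the_elem (ends f - {a})}" using other_end[of "ends f" a] nl f by simp
    ultimately have "ends e = ends f" using eq by simp
    then show "e = f" using np e f by blast
  qed
  show "(\<lambda>e. the_elem (ends e - {a})) ` {e\<in>E. a \<in> ends e} \<subseteq> V - {a}"
  proof
    fix y assume "y \<in> (\<lambda>e. the_elem (ends e - {a})) ` {e\<in>E. a \<in> ends e}"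
    then obtain e where e: "e \<in> E" "a \<in> ends e" "y = the_elem (ends e - {a})" by auto
    then have "y \<noteq> a" "y \<in> ends e" using nl other_end[of "ends e" a] by auto
    then show "y \<in> V - {a}" using mg e unfolding multigraph_def by auto
  qed
qed

lemma deg_le:
  assumes mg: "multigraph V E ends" and nl: "\<forall>e\<in>E. card (ends e) = 2"
    and np: "\<forall>e\<in>E. \<forall>f\<in>E. ends e = ends f \<longrightarrow> e = f"
  shows "card {e\<in>E. a \<in> ends e} \<le> card (V - {a})"
proof -
  have "finite V" using mg by (simp add: multigraph_def)
  then show ?thesis
    using card_inj_on_le[OF deg_inj[OF assms]] by auto
qed

lemma edge_exists:
  assumes mg: "multigraph V E ends" and nl: "\<forall>e\<in>E. card (ends e) = 2"
    and np: "\<forall>e\<in>E. \<forall>f\<in>E. ends e = ends f \<longrightarrow> e = f"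
    and deg: "card {e\<in>E. a \<in> ends e} \<ge> card (V - {a})"
    and b: "b \<in> V" "b \<noteq> a"
  shows "\<exists>e\<in>E. ends e = {a, b}"
proof -
  let ?f = "\<lambda>e. the_elem (ends e - {a})"
  let ?I = "{e\<in>E. a \<in> ends e}"
  have fV: "finite V" using mg by (simp add: multigraph_def)
  have "card (?f ` ?I) = card ?I" using deg_inj(1)[OF assms(1-3)] by (rule card_image)
  moreover have "card (?f ` ?I) \<le> card (V - {a})"
    using card_mono[OF _ deg_inj(2)[OF assms(1-3)]] fV by simp
  ultimately have "card (?f ` ?I) = card (V - {a})" using deg by simp
  then have "?f ` ?I = V - {a}"
    using card_subset_eq[OF _ deg_inj(2)[OF assms(1-3)]] fV by simp
  then have "b \<in> ?f ` ?I" using b by simp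
  then obtain e where e: "e \<in> E" "a \<in> ends e" "b = ?f e" by auto
  then show ?thesis using other_end[of "ends e" a] nl by auto
qed



lemma two_subset3:
  assumes "card S = 2" "S \<subseteq> {a, b, c}"
  shows "S = {a, b} \<or> S = {b, c} \<or> S = {c, a}"
proof -
  obtain x y where S: "S = {x, y}" "x \<noteq> y" using assms(1) by (metis card_2_iff)
  have "x \<in> {a, b, c}" "y \<in> {a, b, c}" using S assms(2) by auto
  then have "(x = a \<or> x = b \<or> x = c) \<and> (y = a \<or> y = b \<or> y = c)" by simp
  then show ?thesis using S(2) unfolding S(1) by (elim conjE disjE) (simp_all add: insert_commute)
qed

lemma K4:
  fixes w :: "'e \<Rightarrow> nat"
  assumes mg: "multigraph V E ends" and nl: "\<forall>e\<in>E. card (ends e) = 2"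
    and np: "\<forall>e\<in>E. \<forall>f\<in>E. ends e = ends f \<longrightarrow> e = f"
    and cV: "card V = 4" and deg: "\<forall>v\<in>V. card {e\<in>E. v \<in> ends e} \<ge> 3"
  shows "\<exists>vs es. cyc V E ends vs es \<and> 4 * sum w (set es) \<le> 2 * sum w E"
proof -
  have fV: "finite V" and fE: "finite E" and sub: "\<forall>e\<in>E. ends e \<subseteq> V"
    using mg by (auto simp: multigraph_def)
  define T where "T d = sum w {e\<in>E. d \<notin> ends e}" for d
  have sumT: "(\<Sum>d\<in>V. T d) = 2 * sum w E"
  proof -
    have "(\<Sum>d\<in>V. T d) = (\<Sum>d\<in>V. \<Sum>e\<in>E. if d \<notin> ends e then w e else 0)"
      unfolding T_def using fE by (simp add: sum.inter_filter)
    also have "\<dots> = (\<Sum>e\<in>E. \<Sum>d\<in>V. if d \<notin> ends e then w e else 0)" by (rule sum.swap)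
    also have "\<dots> = (\<Sum>e\<in>E. 2 * w e)"
    proof (rule sum.cong)
      fix e assume e: "e \<in> E"
      have "(\<Sum>d\<in>V. if d \<notin> ends e then w e else 0) = sum (\<lambda>_. w e) {d\<in>V. d \<notin> ends e}"
        by (subst sum.inter_filter[OF fV]) simp
      also have "{d\<in>V. d \<notin> ends e} = V - ends e" by auto
      finally have 1: "(\<Sum>d\<in>V. if d \<notin> ends e then w e else 0) = card (V - ends e) * w e" by simp
      have "ends e \<subseteq> V" using e sub by auto
      moreover have "finite (ends e)" using calculation fV finite_subset by auto
      ultimately have "card (V - ends e) = 2" using e nl cV by (simp add: card_Diff_subset)
      then show "(\<Sum>d\<in>V. if d \<notin> ends e then w e else 0) = 2 * w e" using 1 by simp
    qed simp
    finally show ?thesis by (simp add: sum_distrib_left)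
  qed
  obtain d where d: "d \<in> V" "4 * T d \<le> 2 * sum w E"
  proof (rule ccontr)
    assume "\<not> thesis"
    then have lt: "\<And>d. d \<in> V \<Longrightarrow> 2 * sum w E < 4 * T d" using that by force
    have "V \<noteq> {}" using cV by auto
    then have "(\<Sum>d\<in>V. 2 * sum w E) < (\<Sum>d\<in>V. 4 * T d)"
      using fV lt by (intro sum_strict_mono) auto
    then show False using sumT cV by (simp add: sum_distrib_left[symmetric])
  qed
  have "card (V - {d}) = 3" using cV d fV by simp
  then obtain a b c where abc: "V - {d} = {a, b, c}" "a \<noteq> b" "b \<noteq> c" "a \<noteq> c"
    by (metis card_3_iff)
  have deg': "card {e\<in>E. x \<in> ends e} \<ge> card (V - {x})" if "x \<in> V" for x
    using deg that cV fV by simp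
  have inV: "a \<in> V" "b \<in> V" "c \<in> V" "a \<noteq> d" "b \<noteq> d" "c \<noteq> d" using abc(1) by blast+
  obtain eab where eab: "eab \<in> E" "ends eab = {a, b}"
    using edge_exists[OF mg nl np deg'[OF inV(1)] inV(2)] abc by blast
  obtain ebc where ebc: "ebc \<in> E" "ends ebc = {b, c}"
    using edge_exists[OF mg nl np deg'[OF inV(2)] inV(3)] abc by blast
  obtain eca where eca: "eca \<in> E" "ends eca = {c, a}"
    using edge_exists[OF mg nl np deg'[OF inV(3)] inV(1)] abc by blast
  have "a \<in> ends eab" "a \<notin> ends ebc" "b \<in> ends ebc" "b \<notin> ends eca" "c \<in> ends eca" "c \<notin> ends eab"
    using eab ebc eca abc by auto
  then have ne: "eab \<noteq> ebc" "ebc \<noteq> eca" "eab \<noteq> eca" by auto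
  have cy: "cyc V E ends [a, b, c] [eab, ebc, eca]"
    unfolding cyc_def
  proof (intro conjI)
    show "\<forall>i<length [eab, ebc, eca]. ends ([eab, ebc, eca] ! i) = {[a, b, c] ! i, [a, b, c] ! ((i + 1) mod length [eab, ebc, eca])}"
    proof (intro allI impI)
      fix i assume "i < length [eab, ebc, eca]"
      then have "i = 0 \<or> i = 1 \<or> i = 2" by auto
      then show "ends ([eab, ebc, eca] ! i) = {[a, b, c] ! i, [a, b, c] ! ((i + 1) mod length [eab, ebc, eca])}"
        by (elim disjE) (simp_all add: eab ebc eca)
    qed
  qed (simp_all add: inV abc eab ebc eca ne)
  have "set [eab, ebc, eca] = {e\<in>E. d \<notin> ends e}"
  proof
    show "set [eab, ebc, eca] \<subseteq> {e\<in>E. d \<notin> ends e}"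
      using eab ebc eca inV by simp
    show "{e\<in>E. d \<notin> ends e} \<subseteq> set [eab, ebc, eca]"
    proof
      fix e assume e: "e \<in> {e\<in>E. d \<notin> ends e}"
      then have "ends e \<subseteq> V" using sub by simp
      then have "ends e \<subseteq> {a, b, c}" using e abc(1) by blast
      moreover have "card (ends e) = 2" using nl e by simp
      ultimately have "ends e = {a, b} \<or> ends e = {b, c} \<or> ends e = {c, a}"
        using two_subset3 by metis
      moreover have "e \<in> E" using e by simp
      ultimately have "e = eab \<or> e = ebc \<or> e = eca" using np eab ebc eca by metis
      then show "e \<in> set [eab, ebc, eca]" by simp
    qed
  qed
  then have "sum w (set [eab, ebc, eca]) = T d" by (simp add: T_def)
  then show ?thesis using cy d by metis
qed



lemma mg_sub_edges: "multigraph V E ends \<Longrightarrow> E' \<subseteq> E \<Longrightarrow> multigraph V E' ends"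
  unfolding multigraph_def by (auto intro: finite_subset)

lemma mg_del_vertex: "multigraph V E ends \<Longrightarrow> E' \<subseteq> E \<Longrightarrow> (\<forall>e\<in>E'. v \<notin> ends e) \<Longrightarrow> multigraph (V - {v}) E' ends"
  unfolding multigraph_def by (auto intro: finite_subset)

lemma mg_V_ne: "multigraph V E ends \<Longrightarrow> e \<in> E \<Longrightarrow> V \<noteq> {}"
  unfolding multigraph_def by force

lemma mg_card_V: "multigraph V E ends \<Longrightarrow> e \<in> E \<Longrightarrow> card (ends e) \<le> card V"
  unfolding multigraph_def by (auto intro: card_mono)

lemma cyc_sum_le: "cyc V E ends vs es \<Longrightarrow> finite E \<Longrightarrow> sum (w :: 'e \<Rightarrow> nat) (set es) \<le> sum w E"
  unfolding cyc_def by (auto intro: sum_mono2)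

lemma cyc_loop: "e \<in> E \<Longrightarrow> v \<in> V \<Longrightarrow> ends e = {v} \<Longrightarrow> cyc V E ends [v] [e]"
  unfolding cyc_def by auto

lemma cyc_par: "e \<in> E \<Longrightarrow> f \<in> E \<Longrightarrow> e \<noteq> f \<Longrightarrow> x \<in> V \<Longrightarrow> y \<in> V \<Longrightarrow> x \<noteq> y \<Longrightarrow>
   ends e = {x, y} \<Longrightarrow> ends f = {x, y} \<Longrightarrow> cyc V E ends [x, y] [e, f]"
  unfolding cyc_def
proof (intro conjI allI impI)
  fix i assume "e \<in> E" "f \<in> E" "e \<noteq> f" "x \<in> V" "y \<in> V" "x \<noteq> y" "ends e = {x, y}" "ends f = {x, y}"
    "i < length [e, f]"
  then show "ends ([e, f] ! i) = {[x, y] ! i, [x, y] ! ((i + 1) mod length [e, f])}"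
    by (cases i) (auto simp: insert_commute)
qed auto

lemma heavy:
  fixes w :: "'e \<Rightarrow> nat"
  assumes IHp: "\<And>E'. multigraph V E' ends \<Longrightarrow> card V + (j - 1) \<le> card E' \<Longrightarrow> E' \<noteq> {} \<Longrightarrow>
      \<exists>vs es. cyc V E' ends vs es \<and> (j + 1) * sum w (set es) \<le> 2 * sum w E'"
    and j: "0 < j" "j \<le> 2" and mg: "multigraph V E ends" and e: "e \<in> E"
    and cE: "card V + j \<le> card E" and hv: "sum w E \<le> (j + 2) * w e"
  shows "\<exists>vs es. cyc V E ends vs es \<and> (j + 2) * sum w (set es) \<le> 2 * sum w E"
proof -
  have fE: "finite E" using mg by (simp add: multigraph_def)
  have mg': "multigraph V (E - {e}) ends" using mg by (rule mg_sub_edges) auto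
  have cE': "card (E - {e}) = card E - 1" using e fE by simp
  have "V \<noteq> {}" using mg_V_ne[OF mg e] .
  then have "card V \<ge> 1" using mg by (simp add: multigraph_def Suc_le_eq card_gt_0_iff)
  have ne: "E - {e} \<noteq> {}"
  proof
    assume "E - {e} = {}"
    then have "E = {e}" using e by auto
    then show False using cE \<open>card V \<ge> 1\<close> j by simp
  qed
  obtain vs es where c: "cyc V (E - {e}) ends vs es" and b: "(j + 1) * sum w (set es) \<le> 2 * sum w (E - {e})"
    using IHp[OF mg' _ ne] cE cE' j by fastforce
  have cy: "cyc V E ends vs es" by (rule cyc_mono[OF c]) auto
  have sW: "sum w E = w e + sum w (E - {e})" using e fE by (simp add: sum.remove)
  have "(j + 2) * sum w (set es) \<le> 2 * sum w E"
  proof (cases "j = 1")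
    case True
    then show ?thesis using b sW hv by simp
  next
    case False
    then have "j = 2" using j by simp
    then show ?thesis using b sW hv by simp
  qed
  then show ?thesis using cy by blast
qed



lemma main_inner:
  fixes w :: "'e \<Rightarrow> nat" and V :: "'a set" and E :: "'e set"
  assumes IHp: "\<And>(V :: 'a set) (E :: 'e set) ends (w :: 'e \<Rightarrow> nat). 0 < j \<Longrightarrow> multigraph V E ends \<Longrightarrow>
      card V + (j - 1) \<le> card E \<Longrightarrow> E \<noteq> {} \<Longrightarrow>
      \<exists>vs es. cyc V E ends vs es \<and> (j + 1) * sum w (set es) \<le> 2 * sum w E"
    and j: "j \<le> 2"
  shows "multigraph V E ends \<Longrightarrow> card V + j \<le> card E \<Longrightarrow> E \<noteq> {} \<Longrightarrow>
      \<exists>vs es. cyc V E ends vs es \<and> (j + 2) * sum w (set es) \<le> 2 * sum w E"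
proof (induction "card V + card E" arbitrary: V E ends w rule: less_induct)
  case less
  note mg = less.prems(1) and cE = less.prems(2) and ne = less.prems(3)
  have fV: "finite V" and fE: "finite E" and sub: "\<forall>e\<in>E. ends e \<subseteq> V"
    and c12: "\<forall>e\<in>E. card (ends e) = 1 \<or> card (ends e) = 2"
    using mg by (auto simp: multigraph_def)
  have cV1: "card V \<ge> 1" using mg_V_ne[OF mg] ne fV by (auto simp: Suc_le_eq card_gt_0_iff)
  let ?W = "sum w E"
  have heavy': "\<exists>vs es. cyc V E ends vs es \<and> (j + 2) * sum w (set es) \<le> 2 * ?W"
    if "0 < j" "e \<in> E" "?W \<le> (j + 2) * w e" for e
    by (rule heavy[OF _ that(1) j mg that(2) cE that(3)]) (rule IHp[OF that(1)])
  show ?case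
  proof (cases "card V + j < card E")
    case True
    obtain e where e: "e \<in> E" using ne by auto
    have mg': "multigraph V (E - {e}) ends" using mg by (rule mg_sub_edges) auto
    have cE': "card (E - {e}) = card E - 1" using e fE by simp
    have ne': "E - {e} \<noteq> {}"
    proof
      assume "E - {e} = {}"
      then have "E = {e}" using e by auto
      then show False using True cV1 by simp
    qed
    obtain vs es where c: "cyc V (E - {e}) ends vs es"
      and b: "(j + 2) * sum w (set es) \<le> 2 * sum w (E - {e})"
      using less.hyps[of V "E - {e}", OF _ mg' _ ne'] cE' True e fE
      by (metis (no_types, lifting) One_nat_def Suc_pred add_less_cancel_left card_gt_0_iff
          diff_less empty_iff less_Suc_eq_le zero_less_one)
    have cy: "cyc V E ends vs es" by (rule cyc_mono[OF c]) auto
    have "sum w (E - {e}) \<le> ?W" using fE by (intro sum_mono2) auto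
    then show ?thesis using cy b by (meson le_trans mult_le_mono2)
  next
    case False
    then have cEq: "card E = card V + j" using cE by simp
    have weW: "w e \<le> ?W" if "e \<in> E" for e using that fE by (simp add: member_le_sum)
    show ?thesis
    proof (cases "\<exists>e\<in>E. card (ends e) = 1")
      case True
      then obtain e where e: "e \<in> E" "card (ends e) = 1" by blast
      then obtain v where v: "ends e = {v}" by (metis card_1_singletonE)
      have vV: "v \<in> V" using sub e v by auto
      have cy: "cyc V E ends [v] [e]" using cyc_loop[of e E v V ends] e(1) vV v by blast
      show ?thesis
      proof (cases "(j + 2) * w e \<le> 2 * ?W")
        case True
        then have "(j + 2) * sum w (set [e]) \<le> 2 * ?W" by simp
        then show ?thesis using cy by blast
      next
        case False
        have "j \<noteq> 0"
        proof
          assume "j = 0"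
          then show False using False weW[OF e(1)] by simp
        qed
        then show ?thesis using heavy'[OF _ e(1)] False by simp
      qed
    next
      case noloop: False
      then have nl: "\<forall>e\<in>E. card (ends e) = 2" using c12 by auto
      show ?thesis
      proof (cases "\<exists>e\<in>E. \<exists>f\<in>E. e \<noteq> f \<and> ends e = ends f")
        case True
        then obtain e f where ef: "e \<in> E" "f \<in> E" "e \<noteq> f" "ends e = ends f" by blast
        obtain x y where xy: "ends e = {x, y}" "x \<noteq> y" using nl ef(1) by (metis card_2_iff)
        have xyV: "x \<in> V" "y \<in> V" using sub ef(1) xy by auto
        have cy: "cyc V E ends [x, y] [e, f]"
          using cyc_par[of e E f x V y ends] ef xy xyV by simp
        have sef: "sum w (set [e, f]) = w e + w f" using ef(3) by simp
        have sefW: "w e + w f \<le> ?W"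
        proof -
          have "sum w {e, f} \<le> ?W" using fE ef by (intro sum_mono2) auto
          then show ?thesis using ef(3) by simp
        qed
        show ?thesis
        proof (cases "(j + 2) * (w e + w f) \<le> 2 * ?W")
          case True
          then have "(j + 2) * sum w (set [e, f]) \<le> 2 * ?W" using sef by simp
          then show ?thesis using cy by blast
        next
          case False
          have j0: "j \<noteq> 0"
          proof
            assume "j = 0"
            then show False using False sefW by simp
          qed
          then have j12: "j = 1 \<or> j = 2" using j by auto
          show ?thesis
          proof (cases "w f \<le> w e")
            case True
            have "?W \<le> (j + 2) * w e" using j12 False True by auto
            then show ?thesis using heavy'[OF _ ef(1)] j0 by simp
          next
            case False2: False
            have "?W \<le> (j + 2) * w f" using j12 False False2 by auto
            then show ?thesis using heavy'[OF _ ef(2)] j0 by simp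
          qed
        qed
      next
        case nopar: False
        then have np: "\<forall>e\<in>E. \<forall>f\<in>E. ends e = ends f \<longrightarrow> e = f" by blast
        show ?thesis
        proof (cases "\<exists>v\<in>V. card {e\<in>E. v \<in> ends e} \<le> 2")
          case True
          then obtain v where v: "v \<in> V" "card {e\<in>E. v \<in> ends e} \<le> 2" by blast
          have finc: "finite {e\<in>E. v \<in> ends e}" using fE by simp
          have cVv: "card (V - {v}) = card V - 1" using v fV by simp
          consider (d0) "card {e\<in>E. v \<in> ends e} = 0" | (d1) "card {e\<in>E. v \<in> ends e} = 1"
            | (d2) "card {e\<in>E. v \<in> ends e} = 2" using v(2) by linarith
          then show ?thesis
          proof cases
            case d0
            then have "{e\<in>E. v \<in> ends e} = {}" using finc by simp
            then have nv: "\<forall>e\<in>E. v \<notin> ends e" by blast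
            have mg': "multigraph (V - {v}) E ends" using mg_del_vertex[OF mg _ nv] by simp
            obtain vs es where c: "cyc (V - {v}) E ends vs es"
              and b: "(j + 2) * sum w (set es) \<le> 2 * sum w E"
              using less.hyps[of "V - {v}" E, OF _ mg' _ ne] cVv cEq cV1 by fastforce
            have "cyc V E ends vs es" by (rule cyc_mono[OF c]) auto
            then show ?thesis using b by blast
          next
            case d1
            then obtain e where e: "{e\<in>E. v \<in> ends e} = {e}" by (metis card_1_singletonE)
            then have eE: "e \<in> E" by blast
            have nv: "\<forall>f\<in>E - {e}. v \<notin> ends f" using e by blast
            have mg': "multigraph (V - {v}) (E - {e}) ends" using mg_del_vertex[OF mg _ nv] by simp
            have cE': "card (E - {e}) = card E - 1" using eE fE by simp
            have ne': "E - {e} \<noteq> {}"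
            proof
              assume "E - {e} = {}"
              then have "E = {e}" using eE by auto
              moreover have "card (ends e) \<le> card V" using mg_card_V[OF mg eE] .
              ultimately show False using cEq nl eE by simp
            qed
            obtain vs es where c: "cyc (V - {v}) (E - {e}) ends vs es"
              and b: "(j + 2) * sum w (set es) \<le> 2 * sum w (E - {e})"
              using less.hyps[of "V - {v}" "E - {e}", OF _ mg' _ ne'] cVv cE' cEq cV1 by fastforce
            have cy: "cyc V E ends vs es" by (rule cyc_mono[OF c]) auto
            have "sum w (E - {e}) \<le> ?W" using fE by (intro sum_mono2) auto
            then show ?thesis using cy b by (meson le_trans mult_le_mono2)
          next
            case d2
            then obtain e1 e2 where e12: "{e\<in>E. v \<in> ends e} = {e1, e2}" "e1 \<noteq> e2"
              by (metis card_2_iff)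
            have e1: "e1 \<in> E" "v \<in> ends e1" and e2: "e2 \<in> E" "v \<in> ends e2"
              using e12(1) by blast+
            define u where "u = the_elem (ends e1 - {v})"
            define x where "x = the_elem (ends e2 - {v})"
            have u: "u \<noteq> v" "ends e1 = {v, u}" using other_end[of "ends e1" v] nl e1 by (auto simp: u_def)
            have x: "x \<noteq> v" "ends e2 = {v, x}" using other_end[of "ends e2" v] nl e2 by (auto simp: x_def)
            have ux: "u \<noteq> x" using np e1 e2 e12(2) u x by metis
            have uxV: "u \<in> V" "x \<in> V" using sub e1 e2 u x by auto
            have nv: "\<forall>f\<in>E. f \<noteq> e1 \<longrightarrow> f \<noteq> e2 \<longrightarrow> v \<notin> ends f" using e12(1) by blast
            define ends' where "ends' = ends(e1 := {u, x})"
            define w' where "w' = w(e1 := w e1 + w e2)"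
            have mg': "multigraph (V - {v}) (E - {e2}) ends'"
              unfolding multigraph_def
            proof (intro conjI)
              show "finite (V - {v})" "finite (E - {e2})" using fV fE by auto
            next
              show "\<forall>f\<in>E - {e2}. ends' f \<subseteq> V - {v} \<and> (card (ends' f) = 1 \<or> card (ends' f) = 2)"
              proof
              fix f assume f: "f \<in> E - {e2}"
              show "ends' f \<subseteq> V - {v} \<and> (card (ends' f) = 1 \<or> card (ends' f) = 2)"
              proof (cases "f = e1")
                case True
                then show ?thesis using uxV u(1) x(1) ux by (simp add: ends'_def)
              next
                case False
                then show ?thesis using f nv sub nl by (auto simp: ends'_def)
              qed
              qed
            qed
            have cE': "card (E - {e2}) = card E - 1" using e2 fE by simp
            have ne': "E - {e2} \<noteq> {}" using e1 e12(2) by blast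
            obtain vs es where c: "cyc (V - {v}) (E - {e2}) ends' vs es"
              and b: "(j + 2) * sum w' (set es) \<le> 2 * sum w' (E - {e2})"
              using less.hyps[of "V - {v}" "E - {e2}", OF _ mg' _ ne'] cVv cE' cEq cV1 by fastforce
            have sW: "sum w' (E - {e2}) = ?W"
            proof -
              have "sum w' (E - {e2}) = w' e1 + sum w' (E - {e2} - {e1})"
                using e1 e12(2) fE by (simp add: sum.remove)
              also have "sum w' (E - {e2} - {e1}) = sum w (E - {e2} - {e1})"
                by (intro sum.cong) (auto simp: w'_def)
              moreover have "?W = w e2 + sum w (E - {e2})"
                using e2(1) fE by (simp add: sum.remove)
              moreover have "sum w (E - {e2}) = w e1 + sum w (E - {e2} - {e1})"
                using e1 e12(2) fE by (intro sum.remove) auto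
              ultimately show ?thesis by (simp add: w'_def)
            qed
            obtain vs' es' where cy: "cyc V E ends vs' es'" and sw: "sum w (set es') = sum w' (set es)"
              using contract_lift[OF v(1) e1(1) e2(1) e12(2) u(2) x(2) ux, of vs es w] c
              unfolding ends'_def w'_def by blast
            show ?thesis using cy sw b sW by metis
          qed
        next
          case False
          then have deg3: "\<forall>v\<in>V. card {e\<in>E. v \<in> ends e} \<ge> 3" by auto
          have hs: "(\<Sum>v\<in>V. card {e\<in>E. v \<in> ends e}) = 2 * card E" by (rule handshake[OF mg nl])
          have "(\<Sum>v\<in>V. (3::nat)) \<le> (\<Sum>v\<in>V. card {e\<in>E. v \<in> ends e})"
            using deg3 by (intro sum_mono) auto
          then have le1: "3 * card V \<le> 2 * card E" using hs by simp
          obtain v where vV: "v \<in> V" using cV1 by fastforce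
          have "card {e\<in>E. v \<in> ends e} \<le> card (V - {v})" by (rule deg_le[OF mg nl np])
          then have "3 \<le> card V - 1" using deg3 vV fV by fastforce
          then have cV4: "card V = 4" and j2: "j = 2" using le1 cEq j by auto
          obtain vs es where "cyc V E ends vs es" "4 * sum w (set es) \<le> 2 * ?W"
            using K4[OF mg nl np cV4 deg3] by blast
          then show ?thesis using j2 by auto
        qed
      qed
    qed
  qed
qed



lemma main:
  fixes w :: "'e \<Rightarrow> nat" and V :: "'a set" and E :: "'e set"
  shows "j \<le> 2 \<Longrightarrow> multigraph V E ends \<Longrightarrow> card V + j \<le> card E \<Longrightarrow> E \<noteq> {} \<Longrightarrow>
      \<exists>vs es. cyc V E ends vs es \<and> (j + 2) * sum w (set es) \<le> 2 * sum w E"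
proof (induction j arbitrary: V E ends w)
  case 0
  show ?case by (rule main_inner[OF _ 0(1) 0(2) 0(3) 0(4)]) simp
next
  case (Suc j)
  show ?case
  proof (rule main_inner[OF _ Suc(2) Suc(3) Suc(4) Suc(5)])
    fix V' :: "'a set" and E' :: "'e set" and ends' w'
    assume "0 < Suc j" "multigraph V' E' ends'" "card V' + (Suc j - 1) \<le> card E'" "E' \<noteq> {}"
    then show "\<exists>vs es. cyc V' E' ends' vs es \<and> (Suc j + 1) * sum w' (set es) \<le> 2 * sum w' E'"
      using Suc.IH[of V' E' ends' w'] Suc(2) by simp
  qed
qed

theorem lemma3p3:
  fixes V :: "'a set" and E :: "'e set" and ends :: "'e \<Rightarrow> 'a set" and n :: nat
  assumes "multigraph V E ends"
    and "card V = n"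
    and "card E \<ge> n + 2"
  shows "\<exists>k. has_cycle_of_length V E ends k \<and> real k \<le> real n / 2 + 1"
proof -
  obtain E0 where E0: "E0 \<subseteq> E" "card E0 = n + 2" "finite E0"
    using obtain_subset_with_card_n[OF assms(3)] by blast
  have mg0: "multigraph V E0 ends" using mg_sub_edges[OF assms(1) E0(1)] .
  have ne: "E0 \<noteq> {}" using E0 by auto
  obtain vs es where c: "cyc V E0 ends vs es"
    and b: "(2 + 2) * sum (\<lambda>_. 1::nat) (set es) \<le> 2 * sum (\<lambda>_. 1::nat) E0"
    using main[of 2 V E0 ends "\<lambda>_. 1"] mg0 ne E0 assms(2) by auto
  have d: "distinct es" using c by (simp add: cyc_def)
  have "4 * length es \<le> 2 * (n + 2)" using b E0 d by (simp add: distinct_card)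
  then have le: "real (length es) \<le> real n / 2 + 1" by simp
  have "has_cycle_of_length V E ends (length es)"
    using c E0(1) unfolding cyc_def has_cycle_of_length_def by blast
  then show ?thesis using le by blast
qed

end
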